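(* Let $n\geq1$ and $m=2^{n+1}-1$. Let $e_1,e_3,\dots,e_{2^n-1}\in\mathrm K(n)^*(\mathrm{SO}_m)$ be the generators of $\mathrm K(n)^*(\mathrm{SO}_m)=\mathbb F_2[v_n^{\pm1}][e_1,e_3,\dots,e_{2^n-1}]/(e_{2i-1}^{2^{k_i}})$, $k_i=\lfloor\log_2\frac{2^{n+1}-2}{2i-1}\rfloor$, with co-multiplication as in Theorem 3.1, and let $\alpha_{2^n-1}\in\mathrm K(n)^*(\mathrm{SO}_m)^\vee$ be the element of the basis dual to the monomial basis $\{\prod_i e_{2i-1}^{t_i}:0\le t_i<2^{k_i}\}$ corresponding to $e_{2^n-1}$. Then the only idempotents of the algebra $\mathrm K(n)^*(\mathrm{SO}_m)^\vee$ other than $0$ and $1$ are $v_n^{-1}\alpha_{2^n-1}$ and $1-v_n^{-1}\alpha_{2^n-1}$.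
   Context: Base field of characteristic $0$, prime $2$. $\mathrm K(n)^*=\Omega^*\otimes_{\mathbb L}\mathbb F_2[v_n^{\pm1}]$ algebraic Morava K-theory; $\mathrm K(n)^*(\mathrm{SO}_m)$ is a Hopf algebra over $\mathbb F_2[v_n^{\pm1}]$, free of finite rank, with co-multiplication induced by the multiplication of the split group $\mathrm{SO}_m$; $\mathrm K(n)^*(\mathrm{SO}_m)^\vee=\mathrm{Hom}_{\mathbb F_2[v_n^{\pm1}]}(\mathrm K(n)^*(\mathrm{SO}_m),\mathbb F_2[v_n^{\pm1}])$ with multiplication dual to the co-multiplication. Theorem 3.1: $\widetilde\Delta(e_{2^n-1})=v_ne_{2^n-1}\otimes e_{2^n-1}$ and, with $\langle t\rangle=2^n-1-t$, $e_{2^dj}:=e_j^{2^d}$, $\widetilde\Delta(e_{\langle 2k\rangle})=\sum_{i=0}^{\nu_2(k)}v_n^{i+1}e_{\langle k/2^i\rangle}\otimes e_{\langle k/2^i\rangle}\prod_{j<i}(e_{\langle k/2^j\rangle}\otimes1+1\otimes e_{\langle k/2^j\rangle})$ for $1\le k\le2^{n-1}-1$. *)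

theory Defs
  imports Complex_Main "HOL-Library.Poly_Mapping" "HOL-Library.Z2"
    "HOL-Computational_Algebra.Primes"
begin

section \<open>Coefficient ring F_2[v_n, v_n^-1] as the group algebra F_2[Z]\<close>

type_synonym coef = "int \<Rightarrow>\<^sub>0 bit"

definition vn :: coef where "vn = Poly_Mapping.single 1 1"
definition vn_inv :: coef where "vn_inv = Poly_Mapping.single (-1) 1"

section \<open>Truncated polynomial algebras R[x_i : i in I]/(x_i^(B i))\<close>

text \<open>An element is given by its coefficients on the monomial basis;
  a monomial is an exponent vector t with t i < B i on I and t i = 0 off I.\<close>

type_synonym 'i elt = "('i \<Rightarrow> nat) \<Rightarrow> coef"

definition monset :: "'i set \<Rightarrow> ('i \<Rightarrow> nat) \<Rightarrow> ('i \<Rightarrow> nat) set" where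
  "monset I B = {t. (\<forall>i\<in>I. t i < B i) \<and> (\<forall>i. i \<notin> I \<longrightarrow> t i = 0)}"

definition tmul :: "'i set \<Rightarrow> ('i \<Rightarrow> nat) \<Rightarrow> 'i elt \<Rightarrow> 'i elt \<Rightarrow> 'i elt" where
  "tmul I B p q = (\<lambda>t. if t \<in> monset I B then
     (\<Sum>(a,b) \<in> {(a,b). a \<in> monset I B \<and> b \<in> monset I B \<and> (\<lambda>i. a i + b i) = t}. p a * q b)
     else 0)"

definition tone :: "'i set \<Rightarrow> ('i \<Rightarrow> nat) \<Rightarrow> 'i elt" where
  "tone I B = (\<lambda>t. if t = (\<lambda>_. 0) \<and> t \<in> monset I B then 1 else 0)"

definition tadd :: "'i elt \<Rightarrow> 'i elt \<Rightarrow> 'i elt" where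
  "tadd p q = (\<lambda>t. p t + q t)"

definition tsmul :: "coef \<Rightarrow> 'i elt \<Rightarrow> 'i elt" where
  "tsmul c p = (\<lambda>t. c * p t)"

definition tvar :: "'i set \<Rightarrow> ('i \<Rightarrow> nat) \<Rightarrow> 'i \<Rightarrow> 'i elt" where
  "tvar I B i = (\<lambda>t. if t = (\<lambda>j. if j = i then 1 else 0) \<and> t \<in> monset I B then 1 else 0)"

primrec tpow :: "'i set \<Rightarrow> ('i \<Rightarrow> nat) \<Rightarrow> 'i elt \<Rightarrow> nat \<Rightarrow> 'i elt" where
  "tpow I B p 0 = tone I B"
| "tpow I B p (Suc k) = tmul I B p (tpow I B p k)"

definition tprod_list :: "'i set \<Rightarrow> ('i \<Rightarrow> nat) \<Rightarrow> 'i elt list \<Rightarrow> 'i elt" where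
  "tprod_list I B ps = foldr (tmul I B) ps (tone I B)"

definition tsum_list :: "'i elt list \<Rightarrow> 'i elt" where
  "tsum_list ps = foldr tadd ps (\<lambda>_. 0)"

text \<open>Generators e_j, j odd, 1 \<le> j \<le> 2^n - 1, with e_j^(2^(k_j)) = 0,
  k_j = floor(log_2((2^(n+1)-2)/j)).\<close>

definition gens :: "nat \<Rightarrow> nat set" where
  "gens n = {j. odd j \<and> j < 2 ^ n}"

definition kexp :: "nat \<Rightarrow> nat \<Rightarrow> nat" where
  "kexp n j = nat \<lfloor>log 2 (real (2 ^ (n + 1) - 2) / real j)\<rfloor>"

definition bnd :: "nat \<Rightarrow> nat \<Rightarrow> nat" where
  "bnd n j = 2 ^ kexp n j"

definition MonA :: "nat \<Rightarrow> (nat \<Rightarrow> nat) set" where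
  "MonA n = monset (gens n) (bnd n)"

text \<open>The tensor square A \<otimes> A is the truncated algebra in variables
  (False, j) = e_j \<otimes> 1 and (True, j) = 1 \<otimes> e_j.\<close>

definition I2 :: "nat \<Rightarrow> (bool \<times> nat) set" where
  "I2 n = (UNIV :: bool set) \<times> gens n"

definition B2 :: "nat \<Rightarrow> bool \<times> nat \<Rightarrow> nat" where
  "B2 n = (\<lambda>(s, j). bnd n j)"

definition pairmon :: "(nat \<Rightarrow> nat) \<Rightarrow> (nat \<Rightarrow> nat) \<Rightarrow> (bool \<times> nat \<Rightarrow> nat)" where
  "pairmon a b = (\<lambda>(s, j). if s then b j else a j)"

text \<open>e_m for arbitrary m \<ge> 1, via e_(2^d j) = e_j^(2^d) (j odd), placed on
  the left (side = False) or right (side = True) tensor factor.\<close>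

definition Ebar :: "bool \<Rightarrow> nat \<Rightarrow> nat \<Rightarrow> (bool \<times> nat) elt" where
  "Ebar side n m = tpow (I2 n) (B2 n)
     (tvar (I2 n) (B2 n) (side, m div 2 ^ multiplicity (2::nat) m)) (2 ^ multiplicity (2::nat) m)"

definition ang :: "nat \<Rightarrow> nat \<Rightarrow> nat" where
  "ang n t = 2 ^ n - 1 - t"

text \<open>Reduced co-multiplication of generators (Theorem 3.1).\<close>

definition red_coprod :: "nat \<Rightarrow> nat \<Rightarrow> (bool \<times> nat) elt" where
  "red_coprod n j =
    (if j = 2 ^ n - 1 then
       tsmul vn (tmul (I2 n) (B2 n) (Ebar False n j) (Ebar True n j))
     else
       (let k = (2 ^ n - 1 - j) div 2 in
        tsum_list
         (map (\<lambda>i. tsmul (vn ^ (i + 1))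
                 (tmul (I2 n) (B2 n)
                   (tmul (I2 n) (B2 n) (Ebar False n (ang n (k div 2 ^ i)))
                                        (Ebar True n (ang n (k div 2 ^ i))))
                   (tprod_list (I2 n) (B2 n)
                     (map (\<lambda>l. tadd (Ebar False n (ang n (k div 2 ^ l)))
                                     (Ebar True n (ang n (k div 2 ^ l))))
                          [0..<i]))))
              [0..<multiplicity (2::nat) k + 1])))"

definition coprod_gen :: "nat \<Rightarrow> nat \<Rightarrow> (bool \<times> nat) elt" where
  "coprod_gen n j = tadd (tadd (Ebar False n j) (Ebar True n j)) (red_coprod n j)"

text \<open>Co-multiplication of a basis monomial (multiplicativity of \<Delta>).\<close>

definition coprod_mon :: "nat \<Rightarrow> (nat \<Rightarrow> nat) \<Rightarrow> (bool \<times> nat) elt" where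
  "coprod_mon n t = tprod_list (I2 n) (B2 n)
     (map (\<lambda>j. tpow (I2 n) (B2 n) (coprod_gen n j) (t j)) (filter odd [0..<2 ^ n]))"

text \<open>An R-linear form is given by its values on the monomial basis.\<close>

definition dual :: "nat \<Rightarrow> ((nat \<Rightarrow> nat) \<Rightarrow> coef) set" where
  "dual n = {f. \<forall>t. t \<notin> MonA n \<longrightarrow> f t = 0}"

definition dmul :: "nat \<Rightarrow> ((nat \<Rightarrow> nat) \<Rightarrow> coef) \<Rightarrow> ((nat \<Rightarrow> nat) \<Rightarrow> coef)
    \<Rightarrow> ((nat \<Rightarrow> nat) \<Rightarrow> coef)" where
  "dmul n f g = (\<lambda>x. if x \<in> MonA n then
     (\<Sum>a\<in>MonA n. \<Sum>b\<in>MonA n. coprod_mon n x (pairmon a b) * f a * g b) else 0)"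

text \<open>Unit of the dual = counit (augmentation, e_j \<mapsto> 0).\<close>

definition dunit :: "nat \<Rightarrow> (nat \<Rightarrow> nat) \<Rightarrow> coef" where
  "dunit n = (\<lambda>t. if t = (\<lambda>_. 0) then 1 else 0)"

text \<open>Dual basis element to the monomial e_(2^n-1).\<close>

definition alpha :: "nat \<Rightarrow> (nat \<Rightarrow> nat) \<Rightarrow> coef" where
  "alpha n = (\<lambda>t. if t = (\<lambda>i. if i = 2 ^ n - 1 then 1 else 0) then 1 else 0)"

end

theory Submission
  imports Defs "HOL-Library.FuncSet"
begin

lemma coef_add_self: "(c::coef) + c = 0"
  apply (rule poly_mapping_eqI) apply (simp only: lookup_add)
  by (metis add_bit_eq_xor lookup_zero xor_self_eq)
lemma coef_minus: "- (c::coef) = c"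
  using coef_add_self[of c] by (simp add: add_eq_0_iff)
lemma vn_vn_inv: "vn * vn_inv = 1"
  unfolding vn_def vn_inv_def by (simp add: mult_single)

lemma invol_sum:
  fixes g :: "'a \<Rightarrow> coef"
  assumes "finite S" "\<And>s. s\<in>S \<Longrightarrow> \<iota> s \<in> S" "\<And>s. s\<in>S \<Longrightarrow> \<iota> (\<iota> s) = s"
    "\<And>s. s \<in> S \<Longrightarrow> g (\<iota> s) = g s"
  shows "sum g S = sum g {s\<in>S. \<iota> s = s}"
  using assms
proof (induction "card S" arbitrary: S rule: less_induct)
  case less
  show ?case
  proof (cases "\<forall>s\<in>S. \<iota> s = s")
    case True
    then have "{s\<in>S. \<iota> s = s} = S" by blast
    then show ?thesis by simp
  next
    case False
    then obtain s where s: "s \<in> S" "\<iota> s \<noteq> s" by blast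
    define S' where "S' = S - {s, \<iota> s}"
    have iis: "\<iota> s \<in> S" using less(3) s by blast
    have sub: "S' \<subset> S" unfolding S'_def using s by blast
    have card: "card S' < card S" using psubset_card_mono[OF less(2) sub] .
    have IH: "sum g S' = sum g {x\<in>S'. \<iota> x = x}"
    proof (rule less(1)[OF card])
      show "finite S'" using less(2) S'_def by simp
      fix x assume x: "x \<in> S'"
      have "x \<in> S" "x \<noteq> s" "x \<noteq> \<iota> s" using x S'_def by auto
      then have "\<iota> x \<noteq> \<iota> s" "\<iota> x \<noteq> s" using less(4) s(1) by metis+
      then show "\<iota> x \<in> S'" using less(3) \<open>x \<in> S\<close> unfolding S'_def by blast
      show "\<iota> (\<iota> x) = x" using \<open>x \<in> S\<close> less(4) by blast
      show "g (\<iota> x) = g x" using \<open>x \<in> S\<close> less(5) by blast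
    qed
    have sp: "sum g S = sum g S' + sum g {s, \<iota> s}"
      unfolding S'_def using s iis less(2) by (intro sum.subset_diff) auto
    have z: "sum g {s, \<iota> s} = 0" using s less(5)[OF s(1)] coef_add_self by simp
    have fx: "{x\<in>S'. \<iota> x = x} = {x\<in>S. \<iota> x = x}" unfolding S'_def using s less(4) by auto
    show ?thesis using sp z fx IH by simp
  qed
qed


definition tmono :: "'i set \<Rightarrow> ('i \<Rightarrow> nat) \<Rightarrow> ('i \<Rightarrow> nat) \<Rightarrow> 'i elt" where
  "tmono I B c = (\<lambda>u. if u = c \<and> c \<in> monset I B then 1 else 0)"

lemma finite_monset: assumes "finite I" shows "finite (monset I B)"
proof -
  have "monset I B \<subseteq> (\<lambda>f i. if i \<in> I then f i else 0) ` (PiE I (\<lambda>i. {..<B i}))"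
  proof
    fix t assume t: "t \<in> monset I B"
    have "t = (\<lambda>i. if i \<in> I then (\<lambda>i. if i \<in> I then t i else undefined) i else 0)" using t unfolding monset_def by (auto simp: fun_eq_iff)
    moreover have "(\<lambda>i. if i \<in> I then t i else undefined) \<in> PiE I (\<lambda>i. {..<B i})" using t unfolding monset_def by (auto simp: PiE_iff extensional_def)
    ultimately show "t \<in> (\<lambda>f i. if i \<in> I then f i else 0) ` (PiE I (\<lambda>i. {..<B i}))" by (intro image_eqI[of _ _ "(\<lambda>i. if i \<in> I then t i else undefined)"]) auto
  qed
  moreover have "finite (PiE I (\<lambda>i. {..<B i}))" using assms by (intro finite_PiE) auto
  ultimately show ?thesis using finite_subset by blast
qed

lemma monset_add_D: "(\<lambda>i. a i + b i) \<in> monset I B \<Longrightarrow> a \<in> monset I B \<and> b \<in> monset I B"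
  unfolding monset_def by auto

lemma tmul_tsmul: "tmul I B (tsmul c p) (tsmul d q) = tsmul (c*d) (tmul I B p q)"
  unfolding tmul_def tsmul_def
  by (auto simp: sum_distrib_left case_prod_unfold mult_ac intro!: sum.cong)

lemma tsmul_one[simp]: "tsmul 1 p = p" unfolding tsmul_def by simp

lemma tone_mono: "tone I B = tmono I B (\<lambda>_. 0)"
  unfolding tone_def tmono_def by auto

lemma tvar_mono: "tvar I B i = tmono I B (\<lambda>j. if j = i then 1 else 0)"
  unfolding tvar_def tmono_def by auto

lemma tmul_mono:
  assumes "finite I"
  shows "tmul I B (tmono I B a) (tmono I B b) = tmono I B (\<lambda>i. a i + b i)"
proof
  fix t
  show "tmul I B (tmono I B a) (tmono I B b) t = tmono I B (\<lambda>i. a i + b i) t"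
  proof (cases "t \<in> monset I B")
    case False then show ?thesis unfolding tmul_def tmono_def by auto
  next
    case True
    let ?S = "{(a',b'). a' \<in> monset I B \<and> b' \<in> monset I B \<and> (\<lambda>i. a' i + b' i) = t}"
    have fin: "finite ?S"
      by (rule finite_subset[of _ "monset I B \<times> monset I B"])
         (auto simp: finite_monset[OF assms])
    have "tmul I B (tmono I B a) (tmono I B b) t =
        (\<Sum>x\<in>?S. if x = (a,b) then (if a \<in> monset I B \<and> b \<in> monset I B then 1 else 0) else 0)"
      using True unfolding tmul_def tmono_def by (auto intro!: sum.cong)
    also have "\<dots> = (if (a,b) \<in> ?S then (if a \<in> monset I B \<and> b \<in> monset I B then 1 else 0) else 0)"
      using fin by (simp add: sum.delta')
    also have "\<dots> = tmono I B (\<lambda>i. a i + b i) t"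
      unfolding tmono_def using monset_add_D[of a b I B] True by auto
    finally show ?thesis .
  qed
qed

lemma tpow_smono:
  assumes "finite I"
  shows "tpow I B (tsmul c (tmono I B a)) k = tsmul (c^k) (tmono I B (\<lambda>i. k * a i))"
proof (induction k)
  case 0 then show ?case by (simp add: tone_mono)
next
  case (Suc k)
  show ?case using tmul_mono[OF assms, of B a "\<lambda>i. k * a i"]
    by (simp add: Suc tmul_tsmul)
qed

lemma tpow_mono:
  assumes "finite I"
  shows "tpow I B (tmono I B a) k = tmono I B (\<lambda>i. k * a i)"
  using tpow_smono[OF assms, where c=1] by simp

lemma tmul_zero: "tmul I B p (\<lambda>_. 0) = (\<lambda>_. 0)"
  unfolding tmul_def by (auto simp: case_prod_unfold)

lemma tmul_tadd_right: "tmul I B p (tadd q r) = tadd (tmul I B p q) (tmul I B p r)"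
  unfolding tmul_def tadd_def
  by (auto simp: case_prod_unfold distrib_left sum.distrib)

lemma tmul_tadd_left: "tmul I B (tadd p q) r = tadd (tmul I B p r) (tmul I B q r)"
  unfolding tmul_def tadd_def
  by (auto simp: case_prod_unfold distrib_right sum.distrib)

lemma tmul_comm: "tmul I B p q = tmul I B q p"
proof
  fix t
  let ?S = "{(a,b). a \<in> monset I B \<and> b \<in> monset I B \<and> (\<lambda>i. a i + b i) = t}"
  have bij: "bij_betw (\<lambda>(a,b). (b,a)) ?S ?S"
    by (rule bij_betw_byWitness[where f'="\<lambda>(a,b). (b,a)"]) (auto simp: add.commute)
  have "(\<Sum>(a,b)\<in>?S. p a * q b) = (\<Sum>x\<in>?S. (\<lambda>(a,b). q a * p b) ((\<lambda>(a,b). (b,a)) x))"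
    by (intro sum.cong) (auto simp: mult.commute)
  also have "\<dots> = (\<Sum>(a,b)\<in>?S. q a * p b)" using sum.reindex_bij_betw[OF bij] by simp
  finally show "tmul I B p q t = tmul I B q p t" unfolding tmul_def by simp
qed


definition swm :: "(bool \<times> nat \<Rightarrow> nat) \<Rightarrow> (bool \<times> nat \<Rightarrow> nat)" where
  "swm u = (\<lambda>(s,j). u (\<not>s, j))"
definition tsw :: "(bool \<times> nat) elt \<Rightarrow> (bool \<times> nat) elt" where
  "tsw p = (\<lambda>u. p (swm u))"
definition symm :: "(bool \<times> nat) elt \<Rightarrow> bool" where
  "symm p \<longleftrightarrow> tsw p = p"
definition dg :: "(bool \<times> nat) elt \<Rightarrow> nat elt" where
  "dg p = (\<lambda>a. p (pairmon a a))"

abbreviation "ms2 n \<equiv> monset (I2 n) (B2 n)"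

lemma swm_swm[simp]: "swm (swm u) = u"
  unfolding swm_def by (auto simp: fun_eq_iff)

lemma swm_add: "swm (\<lambda>i. a i + b i) = (\<lambda>i. swm a i + swm b i)"
  unfolding swm_def by (auto simp: fun_eq_iff)

lemma ms2_iff: "u \<in> ms2 n \<longleftrightarrow> (\<forall>s j. (j \<in> gens n \<longrightarrow> u (s,j) < bnd n j) \<and> (j \<notin> gens n \<longrightarrow> u (s,j) = 0))"
  unfolding monset_def I2_def B2_def by auto

lemma swm_ms2: "swm u \<in> ms2 n \<longleftrightarrow> u \<in> ms2 n"
proof -
  have "(\<forall>s j. P (u (\<not>s, j)) j) \<longleftrightarrow> (\<forall>s j. P (u (s, j)) j)" for P :: "nat \<Rightarrow> nat \<Rightarrow> bool"
  proof
    assume h: "\<forall>s j. P (u (\<not>s, j)) j"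
    show "\<forall>s j. P (u (s, j)) j"
    proof (intro allI)
      fix s j show "P (u (s, j)) j" using h[rule_format, of "\<not>s" j] by simp
    qed
  qed simp
  then show ?thesis unfolding ms2_iff swm_def by simp
qed

lemma swm_eq: "swm u = c \<longleftrightarrow> u = swm c"
proof
  assume "swm u = c" then have "swm (swm u) = swm c" by (rule arg_cong)
  then show "u = swm c" by (simp only: swm_swm)
next
  assume "u = swm c" then show "swm u = c" by (simp only: swm_swm)
qed

lemma swm_add_eq: "(\<lambda>i. a i + b i) = swm t \<Longrightarrow> (\<lambda>i. swm a i + swm b i) = t"
proof -
  assume "(\<lambda>i. a i + b i) = swm t"
  then have "swm (\<lambda>i. a i + b i) = swm (swm t)" by (rule arg_cong)
  then show ?thesis by (simp only: swm_swm swm_add)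
qed

lemma swm_pairmon[simp]: "swm (pairmon a b) = pairmon b a"
  unfolding swm_def pairmon_def by (auto simp: fun_eq_iff)

lemma pairmon_ms2: "pairmon a b \<in> ms2 n \<longleftrightarrow> a \<in> MonA n \<and> b \<in> MonA n"
  unfolding pairmon_def monset_def I2_def B2_def MonA_def
  by (auto simp: case_prod_unfold)

lemma pairmon_inj: "pairmon a b = pairmon c d \<longleftrightarrow> a = c \<and> b = d"
  unfolding pairmon_def by (auto simp: fun_eq_iff)

lemma pairmon_add: "(\<lambda>i. pairmon a b i + pairmon c d i) = pairmon (\<lambda>j. a j + c j) (\<lambda>j. b j + d j)"
  unfolding pairmon_def by (auto simp: fun_eq_iff)

lemma pairmon_split: "u = pairmon (\<lambda>j. u (False, j)) (\<lambda>j. u (True, j))"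
  unfolding pairmon_def by (auto simp: fun_eq_iff)

lemma swm_fix: "swm u = u \<Longrightarrow> u = pairmon (\<lambda>j. u (False, j)) (\<lambda>j. u (False, j))"
proof -
  assume h: "swm u = u"
  have "u (s, j) = u (False, j)" for s j
  proof (cases s)
    case True
    have "swm u (False, j) = u (False, j)" using h by simp
    then show ?thesis using True unfolding swm_def by simp
  qed simp
  then show ?thesis unfolding pairmon_def by (auto simp: fun_eq_iff)
qed

lemma tsw_tmul: "tsw (tmul (I2 n) (B2 n) p q) = tmul (I2 n) (B2 n) (tsw p) (tsw q)"
proof
  fix t
  let ?S = "\<lambda>t. {(a,b). a \<in> ms2 n \<and> b \<in> ms2 n \<and> (\<lambda>i. a i + b i) = t}"
  have bij: "bij_betw (\<lambda>(a,b). (swm a, swm b)) (?S t) (?S (swm t))"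
  proof (rule bij_betw_byWitness[where f'="\<lambda>(a,b). (swm a, swm b)"])
    show "(\<lambda>(a,b). (swm a, swm b)) ` ?S t \<subseteq> ?S (swm t)"
    proof (rule image_subsetI)
      fix x assume "x \<in> ?S t"
      then obtain a b where x: "x = (a,b)" "a \<in> ms2 n" "b \<in> ms2 n" "(\<lambda>i. a i + b i) = t"
        by (cases x) (simp only: mem_Collect_eq case_prod_conv)
      have "(\<lambda>i. swm a i + swm b i) = swm t" unfolding swm_add[symmetric] x(4) by (rule refl)
      then show "(case x of (a, b) \<Rightarrow> (swm a, swm b)) \<in> ?S (swm t)" using x(2,3) unfolding x(1)
        by (simp only: mem_Collect_eq case_prod_conv swm_ms2 simp_thms)
    qed
    show "(\<lambda>(a,b). (swm a, swm b)) ` ?S (swm t) \<subseteq> ?S t"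
    proof (rule image_subsetI)
      fix x assume "x \<in> ?S (swm t)"
      then obtain a b where x: "x = (a,b)" "a \<in> ms2 n" "b \<in> ms2 n" "(\<lambda>i. a i + b i) = swm t"
        by (cases x) (simp only: mem_Collect_eq case_prod_conv)
      have "(\<lambda>i. swm a i + swm b i) = t" using swm_add_eq[OF x(4)] .
      then show "(case x of (a, b) \<Rightarrow> (swm a, swm b)) \<in> ?S t" using x(2,3) unfolding x(1)
        by (simp only: mem_Collect_eq case_prod_conv swm_ms2 simp_thms)
    qed
  qed (auto simp only: case_prod_beta swm_swm prod.collapse fst_conv snd_conv)
  have "(\<Sum>x\<in>?S t. (\<lambda>(a,b). p a * q b) ((\<lambda>(a,b). (swm a, swm b)) x)) = (\<Sum>x\<in>?S (swm t). (\<lambda>(a,b). p a * q b) x)"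
    by (rule sum.reindex_bij_betw[OF bij])
  then have "(\<Sum>(a,b)\<in>?S (swm t). p a * q b) = (\<Sum>x\<in>?S t. (\<lambda>(a,b). p a * q b) ((\<lambda>(a,b). (swm a, swm b)) x))"
    by (rule sym)
  also have "\<dots> = (\<Sum>(a,b)\<in>?S t. tsw p a * tsw q b)"
    by (intro sum.cong refl) (simp only: case_prod_beta tsw_def fst_conv snd_conv)
  finally have eq: "(\<Sum>(a,b)\<in>?S (swm t). p a * q b) = (\<Sum>(a,b)\<in>?S t. tsw p a * tsw q b)" .
  have l: "tsw (tmul (I2 n) (B2 n) p q) t = (if swm t \<in> ms2 n then (\<Sum>(a,b)\<in>?S (swm t). p a * q b) else 0)"
    unfolding tsw_def tmul_def by (rule refl)
  have r: "tmul (I2 n) (B2 n) (tsw p) (tsw q) t = (if t \<in> ms2 n then (\<Sum>(a,b)\<in>?S t. tsw p a * tsw q b) else 0)"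
    unfolding tmul_def by (rule refl)
  show "tsw (tmul (I2 n) (B2 n) p q) t = tmul (I2 n) (B2 n) (tsw p) (tsw q) t"
    unfolding l r eq swm_ms2 by (rule refl)
qed

lemma tsw_tadd: "tsw (tadd p q) = tadd (tsw p) (tsw q)"
  unfolding tsw_def tadd_def by simp
lemma tsw_tsmul: "tsw (tsmul c p) = tsmul c (tsw p)"
  unfolding tsw_def tsmul_def by simp
lemma tsw_tsw[simp]: "tsw (tsw p) = p"
  unfolding tsw_def by simp
lemma tsw_tmono: "tsw (tmono (I2 n) (B2 n) c) = tmono (I2 n) (B2 n) (swm c)"
  unfolding tsw_def tmono_def by (simp only: swm_eq swm_ms2)
lemma tsw_tone: "tsw (tone (I2 n) (B2 n)) = tone (I2 n) (B2 n)"
  unfolding tone_mono tsw_tmono by (simp add: swm_def case_prod_unfold)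
lemma tsw_tpow: "tsw (tpow (I2 n) (B2 n) p k) = tpow (I2 n) (B2 n) (tsw p) k"
  by (induction k) (simp_all add: tsw_tone tsw_tmul)

lemma tsw_Ebar: "tsw (Ebar False n m) = Ebar True n m"
proof -
  have "swm (\<lambda>j. if j = (False, x) then 1 else 0) = (\<lambda>j. if j = (True, x) then 1 else 0)" for x
    unfolding swm_def by (auto simp: fun_eq_iff)
  then show ?thesis unfolding Ebar_def tsw_tpow tvar_mono tsw_tmono by simp
qed

lemma symm_tmul: "symm p \<Longrightarrow> symm q \<Longrightarrow> symm (tmul (I2 n) (B2 n) p q)"
  unfolding symm_def by (simp add: tsw_tmul)
lemma symm_tadd: "symm p \<Longrightarrow> symm q \<Longrightarrow> symm (tadd p q)"
  unfolding symm_def by (simp add: tsw_tadd)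
lemma symm_tsmul: "symm p \<Longrightarrow> symm (tsmul c p)"
  unfolding symm_def by (simp add: tsw_tsmul)
lemma symm_tone: "symm (tone (I2 n) (B2 n))"
  unfolding symm_def by (simp add: tsw_tone)
lemma symm_tpow: "symm p \<Longrightarrow> symm (tpow (I2 n) (B2 n) p k)"
  unfolding symm_def by (simp add: tsw_tpow)
lemma symm_zero: "symm (\<lambda>_. 0)"
  unfolding symm_def tsw_def by simp
lemma symm_tprod_list: "(\<And>p. p \<in> set ps \<Longrightarrow> symm p) \<Longrightarrow> symm (tprod_list (I2 n) (B2 n) ps)"
  unfolding tprod_list_def by (induction ps) (auto intro: symm_tmul symm_tone)
lemma symm_tsum_list: "(\<And>p. p \<in> set ps \<Longrightarrow> symm p) \<Longrightarrow> symm (tsum_list ps)"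
  unfolding tsum_list_def by (induction ps) (auto intro: symm_tadd symm_zero)
lemma symm_norm: "symm (tadd z (tsw z))"
  unfolding symm_def tadd_def tsw_def by (simp add: add.commute)
lemma symm_sq: "symm (tmul (I2 n) (B2 n) z (tsw z))"
  unfolding symm_def tsw_tmul by (simp add: tmul_comm)


lemma finite_gens: "finite (gens n)"
  unfolding gens_def by (rule finite_subset[of _ "{..<2^n}"]) auto

lemma finite_I2: "finite (I2 n)"
  unfolding I2_def using finite_gens by simp

lemma dg_tsw: "dg (tsw p) = dg p"
  unfolding dg_def tsw_def by simp
lemma dg_tadd: "dg (tadd p q) = tadd (dg p) (dg q)"
  unfolding dg_def tadd_def by simp
lemma dg_tsmul: "dg (tsmul c p) = tsmul c (dg p)"
  unfolding dg_def tsmul_def by simp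
lemma dg_norm: "dg (tadd z (tsw z)) = (\<lambda>_. 0)"
  unfolding dg_def tadd_def tsw_def by (simp add: coef_add_self)
lemma dg_tmono_pair: "dg (tmono (I2 n) (B2 n) (pairmon c c)) = tmono (gens n) (bnd n) c"
  unfolding dg_def tmono_def pairmon_inj pairmon_ms2 MonA_def by simp

lemma symm_app: assumes "symm p" shows "p (swm u) = p u"
proof -
  have "tsw p u = p u" using assms unfolding symm_def by simp
  then show ?thesis unfolding tsw_def .
qed

lemma dg_tmul:
  assumes sp: "symm p" and sq: "symm q"
  shows "dg (tmul (I2 n) (B2 n) p q) = tmul (gens n) (bnd n) (dg p) (dg q)"
proof
  fix a
  show "dg (tmul (I2 n) (B2 n) p q) a = tmul (gens n) (bnd n) (dg p) (dg q) a"
  proof (cases "a \<in> MonA n")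
    case False
    then have "pairmon a a \<notin> ms2 n" by (simp add: pairmon_ms2)
    then show ?thesis using False unfolding dg_def tmul_def MonA_def by simp
  next
    case True
    have pm: "pairmon a a \<in> ms2 n" using True by (simp add: pairmon_ms2)
    let ?S = "{(u,w). u \<in> ms2 n \<and> w \<in> ms2 n \<and> (\<lambda>i. u i + w i) = pairmon a a}"
    let ?g = "\<lambda>(u,w). p u * q w"
    let ?\<iota> = "\<lambda>(u,w). (swm u, swm w)"
    let ?F = "{x \<in> ?S. ?\<iota> x = x}"
    let ?S1 = "{(b,c). b \<in> MonA n \<and> c \<in> MonA n \<and> (\<lambda>i. b i + c i) = a}"
    have finS: "finite ?S"
      by (rule finite_subset[of _ "ms2 n \<times> ms2 n"]) (auto simp: finite_monset[OF finite_I2])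
    have "sum ?g ?S = sum ?g ?F"
    proof (rule invol_sum[OF finS])
      fix x assume "x \<in> ?S"
      then obtain u w where x: "x = (u,w)" "u \<in> ms2 n" "w \<in> ms2 n" "(\<lambda>i. u i + w i) = pairmon a a"
        by (cases x) (simp only: mem_Collect_eq case_prod_conv)
      have "(\<lambda>i. swm u i + swm w i) = pairmon a a"
        using swm_add_eq[of u w "pairmon a a"] x(4) by (simp only: swm_pairmon)
      then show "?\<iota> x \<in> ?S" using x(2,3) unfolding x(1)
        by (simp only: mem_Collect_eq case_prod_conv swm_ms2 simp_thms)
      show "?\<iota> (?\<iota> x) = x" unfolding x(1) by simp
      show "?g (?\<iota> x) = ?g x" unfolding x(1) using symm_app[OF sp] symm_app[OF sq] by simp
    qed
    also have "sum ?g ?F = sum (\<lambda>x. ?g ((\<lambda>(b,c). (pairmon b b, pairmon c c)) x)) ?S1"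
    proof (rule sum.reindex_bij_betw[symmetric])
      show "bij_betw (\<lambda>(b,c). (pairmon b b, pairmon c c)) ?S1 ?F"
      proof (rule bij_betw_byWitness[where f'="\<lambda>(u,w). (\<lambda>j. u (False,j), \<lambda>j. w (False,j))"])
        show "\<forall>x\<in>?S1. (\<lambda>(u,w). (\<lambda>j. u (False,j), \<lambda>j. w (False,j))) ((\<lambda>(b,c). (pairmon b b, pairmon c c)) x) = x"
          by (auto simp: pairmon_def)
        show "\<forall>y\<in>?F. (\<lambda>(b,c). (pairmon b b, pairmon c c)) ((\<lambda>(u,w). (\<lambda>j. u (False,j), \<lambda>j. w (False,j))) y) = y"
        proof
          fix y assume "y \<in> ?F"
          then obtain u w where y: "y = (u,w)" "swm u = u" "swm w = w"
            by (cases y) auto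
          show "(\<lambda>(b,c). (pairmon b b, pairmon c c)) ((\<lambda>(u,w). (\<lambda>j. u (False,j), \<lambda>j. w (False,j))) y) = y"
            using sym[OF swm_fix[OF y(2)]] sym[OF swm_fix[OF y(3)]] unfolding y(1) by simp
        qed
        show "(\<lambda>(b,c). (pairmon b b, pairmon c c)) ` ?S1 \<subseteq> ?F"
        proof (rule image_subsetI)
          fix x assume "x \<in> ?S1"
          then obtain b c where x: "x = (b,c)" "b \<in> MonA n" "c \<in> MonA n" "(\<lambda>i. b i + c i) = a"
            by (cases x) (simp only: mem_Collect_eq case_prod_conv)
          have "(\<lambda>i. pairmon b b i + pairmon c c i) = pairmon a a"
            unfolding pairmon_add x(4) by (rule refl)
          then show "(\<lambda>(b,c). (pairmon b b, pairmon c c)) x \<in> ?F"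
            using x(2,3) unfolding x(1) by (simp add: pairmon_ms2)
        qed
        show "(\<lambda>(u,w). (\<lambda>j. u (False,j), \<lambda>j. w (False,j))) ` ?F \<subseteq> ?S1"
        proof (rule image_subsetI)
          fix y assume "y \<in> ?F"
          then obtain u w where y: "y = (u,w)" "swm u = u" "swm w = w" "u \<in> ms2 n" "w \<in> ms2 n"
              "(\<lambda>i. u i + w i) = pairmon a a"
            by (cases y) auto
          have u: "u = pairmon (\<lambda>j. u (False, j)) (\<lambda>j. u (False, j))" by (rule swm_fix[OF y(2)])
          have w: "w = pairmon (\<lambda>j. w (False, j)) (\<lambda>j. w (False, j))" by (rule swm_fix[OF y(3)])
          have "(\<lambda>j. u (False, j)) \<in> MonA n" using y(4) by (subst (asm) u) (simp add: pairmon_ms2)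
          moreover have "(\<lambda>j. w (False, j)) \<in> MonA n" using y(5) by (subst (asm) w) (simp add: pairmon_ms2)
          moreover have "(\<lambda>j. u (False, j) + w (False, j)) = a"
          proof
            fix j
            have "u (False, j) + w (False, j) = pairmon a a (False, j)" using fun_cong[OF y(6)] by simp
            then show "u (False, j) + w (False, j) = a j" by (simp add: pairmon_def)
          qed
          ultimately show "(\<lambda>(u,w). (\<lambda>j. u (False,j), \<lambda>j. w (False,j))) y \<in> ?S1"
            unfolding y(1) by simp
        qed
      qed
    qed
    also have "\<dots> = tmul (gens n) (bnd n) (dg p) (dg q) a"
      using True unfolding tmul_def dg_def MonA_def by (auto intro!: sum.cong)
    finally show ?thesis unfolding dg_def tmul_def using pm by simp
  qed
qed


definition NN :: "nat \<Rightarrow> nat" where "NN n = 2 ^ n - 1"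
definition sig :: "nat \<Rightarrow> nat \<Rightarrow> nat" where "sig n j = NN n - (NN n - j) div 2"
definition em :: "nat \<Rightarrow> nat \<Rightarrow> nat" where
  "em m = (\<lambda>i. if i = m div 2 ^ multiplicity (2::nat) m then 2 ^ multiplicity (2::nat) m else 0)"

lemma Ebar_mono: "Ebar side n m = tmono (I2 n) (B2 n)
   (\<lambda>(s,j). if s = side \<and> j = m div 2 ^ multiplicity (2::nat) m then 2 ^ multiplicity (2::nat) m else 0)"
proof -
  have "(\<lambda>i. (2::nat) ^ multiplicity (2::nat) m * (if i = (side, m div 2 ^ multiplicity (2::nat) m) then 1 else 0)) =
        (\<lambda>(s,j). if s = side \<and> j = m div 2 ^ multiplicity (2::nat) m then 2 ^ multiplicity (2::nat) m else 0)"
    by (auto simp: fun_eq_iff)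
  then show ?thesis unfolding Ebar_def tvar_mono tpow_mono[OF finite_I2] by simp
qed

lemma Ebar_sq: "tmul (I2 n) (B2 n) (Ebar False n m) (Ebar True n m) = tmono (I2 n) (B2 n) (pairmon (em m) (em m))"
proof -
  have "(\<lambda>i. (case i of (s,j) \<Rightarrow> if s = False \<and> j = m div 2 ^ multiplicity (2::nat) m then 2 ^ multiplicity (2::nat) m else 0) +
            (case i of (s,j) \<Rightarrow> if s = True \<and> j = m div 2 ^ multiplicity (2::nat) m then 2 ^ multiplicity (2::nat) m else 0))
        = pairmon (em m) (em m)"
    unfolding pairmon_def em_def by (auto simp: fun_eq_iff)
  then show ?thesis unfolding Ebar_mono tmul_mono[OF finite_I2] by simp
qed

lemma dg_Ebar_sq: "dg (tmul (I2 n) (B2 n) (Ebar False n m) (Ebar True n m)) = tmono (gens n) (bnd n) (em m)"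
  unfolding Ebar_sq dg_tmono_pair by (rule refl)

lemma dg_zero: "dg (\<lambda>_. 0) = (\<lambda>_. 0)"
  unfolding dg_def by simp

lemma tsmul_zero: "tsmul c (\<lambda>_. 0) = (\<lambda>_. 0)"
  unfolding tsmul_def by simp

lemma tadd_zero_left: "tadd (\<lambda>_. 0) p = p"
  unfolding tadd_def by simp

lemma tone2_pair: "tone (I2 n) (B2 n) = tmono (I2 n) (B2 n) (pairmon (\<lambda>_. 0) (\<lambda>_. 0))"
proof -
  have "(\<lambda>_. 0) = pairmon (\<lambda>_. 0::nat) (\<lambda>_. 0)" unfolding pairmon_def by (auto simp: fun_eq_iff)
  then show ?thesis unfolding tone_mono by simp
qed

lemma dg_tone: "dg (tone (I2 n) (B2 n)) = tone (gens n) (bnd n)"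
proof -
  have "dg (tone (I2 n) (B2 n)) = dg (tmono (I2 n) (B2 n) (pairmon (\<lambda>_. 0) (\<lambda>_. 0)))"
    by (simp only: tone2_pair)
  also have "\<dots> = tmono (gens n) (bnd n) (\<lambda>_. 0)" by (rule dg_tmono_pair)
  also have "\<dots> = tone (gens n) (bnd n)" by (simp only: tone_mono)
  finally show ?thesis .
qed

lemma symm_Ebar_sq: "symm (tmul (I2 n) (B2 n) (Ebar False n m) (Ebar True n m))"
  using symm_sq[of n "Ebar False n m"] by (simp add: tsw_Ebar)

lemma symm_Ebar_norm: "symm (tadd (Ebar False n m) (Ebar True n m))"
  using symm_norm[of "Ebar False n m"] by (simp add: tsw_Ebar)

lemma dg_Ebar_norm: "dg (tadd (Ebar False n m) (Ebar True n m)) = (\<lambda>_. 0)"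
  using dg_norm[of "Ebar False n m"] by (simp add: tsw_Ebar)

lemma dg_norm_mul:
  assumes "symm R"
  shows "dg (tmul (I2 n) (B2 n) (tadd (Ebar False n m) (Ebar True n m)) R) = (\<lambda>_. 0)"
proof -
  have "tmul (I2 n) (B2 n) (Ebar True n m) R = tmul (I2 n) (B2 n) (tsw (Ebar False n m)) (tsw R)"
    using assms unfolding symm_def by (simp add: tsw_Ebar)
  also have "\<dots> = tsw (tmul (I2 n) (B2 n) (Ebar False n m) R)" by (simp add: tsw_tmul)
  finally show ?thesis unfolding tmul_tadd_left by (simp add: dg_norm)
qed

lemma dg_tsum_list_zero: "(\<And>p. p \<in> set ps \<Longrightarrow> dg p = (\<lambda>_. 0)) \<Longrightarrow> dg (tsum_list ps) = (\<lambda>_. 0)"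
proof (induction ps)
  case Nil then show ?case unfolding tsum_list_def by (simp add: dg_zero)
next
  case (Cons a ps)
  have "dg (tsum_list (a # ps)) = tadd (dg a) (dg (tsum_list ps))"
    unfolding tsum_list_def by (simp add: dg_tadd)
  also have "\<dots> = tadd (\<lambda>_. 0) (\<lambda>_. 0)" using Cons by simp
  finally show ?case by (simp add: tadd_def)
qed

lemma symm_red: "symm (red_coprod n j)"
  unfolding red_coprod_def Let_def
  by (auto intro!: symm_tsmul symm_Ebar_sq symm_tsum_list symm_tmul symm_tprod_list symm_Ebar_norm)

lemma symm_coprod_gen: "symm (coprod_gen n j)"
  unfolding coprod_gen_def by (intro symm_tadd symm_Ebar_norm symm_red)

lemma symm_coprod_mon: "symm (coprod_mon n x)"
  unfolding coprod_mon_def by (auto intro!: symm_tprod_list symm_tpow symm_coprod_gen)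

lemma dg_red: "dg (red_coprod n j) = tsmul vn (tmono (gens n) (bnd n) (em (sig n j)))"
proof (cases "j = 2 ^ n - 1")
  case True
  then have "sig n j = j" unfolding sig_def NN_def by simp
  then show ?thesis using True unfolding red_coprod_def by (simp add: dg_tsmul dg_Ebar_sq)
next
  case False
  define k where "k = (2 ^ n - 1 - j) div 2"
  define T where "T = (\<lambda>i. tsmul (vn ^ (i + 1))
                 (tmul (I2 n) (B2 n)
                   (tmul (I2 n) (B2 n) (Ebar False n (ang n (k div 2 ^ i)))
                                        (Ebar True n (ang n (k div 2 ^ i))))
                   (tprod_list (I2 n) (B2 n)
                     (map (\<lambda>l. tadd (Ebar False n (ang n (k div 2 ^ l)))
                                     (Ebar True n (ang n (k div 2 ^ l))))
                          [0..<i]))))"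
  have red: "red_coprod n j = tsum_list (map T [0..<multiplicity (2::nat) k + 1])"
    unfolding red_coprod_def Let_def T_def k_def by (subst if_not_P[OF False]) (rule refl)
  have T0: "dg (T 0) = tsmul vn (tmono (gens n) (bnd n) (em (sig n j)))"
  proof -
    have "dg (T 0) = tsmul vn (tmul (gens n) (bnd n) (tmono (gens n) (bnd n) (em (ang n k))) (tone (gens n) (bnd n)))"
      unfolding T_def by (simp add: dg_tsmul dg_tmul symm_Ebar_sq symm_tone dg_Ebar_sq dg_tone tprod_list_def)
    also have "ang n k = sig n j" unfolding ang_def sig_def NN_def k_def by simp
    finally show ?thesis unfolding tone_mono tmul_mono[OF finite_gens] by simp
  qed
  have Ti: "dg (T i) = (\<lambda>_. 0)" if i1: "i \<ge> 1" for i
  proof -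
    obtain i' where i: "i = Suc i'" using i1 by (cases i) auto
    define R where "R = tprod_list (I2 n) (B2 n)
                     (map (\<lambda>l. tadd (Ebar False n (ang n (k div 2 ^ l)))
                                     (Ebar True n (ang n (k div 2 ^ l))))
                          [1..<i])"
    have symR: "symm R" unfolding R_def by (auto intro!: symm_tprod_list symm_Ebar_norm)
    have "[0..<i] = 0 # [1..<i]" using i by (simp add: upt_rec)
    then have "T i = tsmul (vn ^ (i + 1))
                 (tmul (I2 n) (B2 n)
                   (tmul (I2 n) (B2 n) (Ebar False n (ang n (k div 2 ^ i)))
                                        (Ebar True n (ang n (k div 2 ^ i))))
                   (tmul (I2 n) (B2 n) (tadd (Ebar False n (ang n k)) (Ebar True n (ang n k))) R))"
      unfolding T_def R_def by (simp add: tprod_list_def)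
    then have "dg (T i) = tsmul (vn ^ (i + 1)) (tmul (gens n) (bnd n)
         (dg (tmul (I2 n) (B2 n) (Ebar False n (ang n (k div 2 ^ i))) (Ebar True n (ang n (k div 2 ^ i)))))
         (dg (tmul (I2 n) (B2 n) (tadd (Ebar False n (ang n k)) (Ebar True n (ang n k))) R)))"
      by (simp only: dg_tsmul dg_tmul[OF symm_Ebar_sq symm_tmul[OF symm_Ebar_norm symR]])
    then show ?thesis unfolding dg_norm_mul[OF symR] tmul_zero tsmul_zero .
  qed
  have "[0..<multiplicity (2::nat) k + 1] = 0 # [1..<multiplicity (2::nat) k + 1]" by (simp add: upt_rec)
  then have "dg (red_coprod n j) = tadd (dg (T 0)) (dg (tsum_list (map T [1..<multiplicity (2::nat) k + 1])))"
    unfolding red by (simp add: tsum_list_def dg_tadd)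
  also have "dg (tsum_list (map T [1..<multiplicity (2::nat) k + 1])) = (\<lambda>_. 0)"
    by (rule dg_tsum_list_zero) (auto simp: Ti)
  finally show ?thesis unfolding T0 tadd_def by simp
qed

lemma dg_coprod_gen: "dg (coprod_gen n j) = tsmul vn (tmono (gens n) (bnd n) (em (sig n j)))"
proof -
  have "dg (coprod_gen n j) = tadd (dg (tadd (Ebar False n j) (Ebar True n j))) (dg (red_coprod n j))"
    unfolding coprod_gen_def by (rule dg_tadd)
  then show ?thesis unfolding dg_Ebar_norm dg_red tadd_zero_left .
qed


definition LL :: "nat \<Rightarrow> nat list" where "LL n = filter odd [0..<2 ^ n]"
definition phi :: "nat \<Rightarrow> (nat \<Rightarrow> nat) \<Rightarrow> (nat \<Rightarrow> nat)" where
  "phi n x = (\<lambda>i. \<Sum>j\<leftarrow>LL n. x j * em (sig n j) i)"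
definition wt :: "nat \<Rightarrow> (nat \<Rightarrow> nat) \<Rightarrow> nat" where
  "wt n x = (\<Sum>j\<leftarrow>LL n. x j)"

lemma dg_tpow: "symm p \<Longrightarrow> dg (tpow (I2 n) (B2 n) p k) = tpow (gens n) (bnd n) (dg p) k"
  by (induction k) (simp_all add: dg_tone dg_tmul symm_tpow)

lemma dg_tprod_list: "(\<And>p. p \<in> set ps \<Longrightarrow> symm p) \<Longrightarrow>
   dg (tprod_list (I2 n) (B2 n) ps) = tprod_list (gens n) (bnd n) (map dg ps)"
proof (induction ps)
  case Nil then show ?case unfolding tprod_list_def by (simp add: dg_tone)
next
  case (Cons a ps)
  have sa: "symm a" using Cons by simp
  have sps: "symm (tprod_list (I2 n) (B2 n) ps)" using Cons by (intro symm_tprod_list) auto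
  have "dg (tprod_list (I2 n) (B2 n) (a # ps)) = tmul (gens n) (bnd n) (dg a) (dg (tprod_list (I2 n) (B2 n) ps))"
    unfolding tprod_list_def using dg_tmul[OF sa sps] by (simp add: tprod_list_def)
  then show ?case using Cons by (simp add: tprod_list_def)
qed

lemma prod_smono_list:
  assumes "finite I"
  shows "tprod_list I B (map (\<lambda>j. tsmul (c j) (tmono I B (a j))) L) =
         tsmul (\<Prod>j\<leftarrow>L. c j) (tmono I B (\<lambda>i. \<Sum>j\<leftarrow>L. a j i))"
proof (induction L)
  case Nil then show ?case unfolding tprod_list_def by (simp add: tone_mono)
next
  case (Cons j L)
  show ?case using Cons unfolding tprod_list_def
    by (simp add: tmul_tsmul tmul_mono[OF assms])
qed

lemma prod_list_power: "(\<Prod>j\<leftarrow>L. (c::coef) ^ x j) = c ^ (\<Sum>j\<leftarrow>L. x j)"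
  by (induction L) (simp_all add: power_add)

lemma dg_coprod_mon: "dg (coprod_mon n x) = tsmul (vn ^ wt n x) (tmono (gens n) (bnd n) (phi n x))"
proof -
  have "dg (coprod_mon n x) = tprod_list (gens n) (bnd n)
      (map (\<lambda>j. dg (tpow (I2 n) (B2 n) (coprod_gen n j) (x j))) (LL n))"
    unfolding coprod_mon_def LL_def
    by (subst dg_tprod_list) (auto intro: symm_tpow symm_coprod_gen simp: comp_def)
  also have "\<dots> = tprod_list (gens n) (bnd n)
      (map (\<lambda>j. tsmul (vn ^ x j) (tmono (gens n) (bnd n) (\<lambda>i. x j * em (sig n j) i))) (LL n))"
    by (simp add: dg_tpow symm_coprod_gen dg_coprod_gen tpow_smono[OF finite_gens])
  also have "\<dots> = tsmul (vn ^ wt n x) (tmono (gens n) (bnd n) (phi n x))"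
    unfolding prod_smono_list[OF finite_gens] prod_list_power wt_def phi_def by (rule refl)
  finally show ?thesis .
qed

lemma coprod_mon_swap: "coprod_mon n x (pairmon b a) = coprod_mon n x (pairmon a b)"
  using symm_app[OF symm_coprod_mon, of n x "pairmon a b"] by simp

lemma finite_MonA: "finite (MonA n)"
  unfolding MonA_def by (rule finite_monset[OF finite_gens])

lemma fixset_diag: "{y \<in> A \<times> A. (\<lambda>(a,b). (b,a)) y = y} = (\<lambda>a. (a,a)) ` A"
proof (rule set_eqI)
  fix y :: "'a \<times> 'a"
  obtain a b where y: "y = (a,b)" by (cases y)
  show "y \<in> {y \<in> A \<times> A. (\<lambda>(a,b). (b,a)) y = y} \<longleftrightarrow> y \<in> (\<lambda>a. (a,a)) ` A"
    unfolding y by auto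
qed

lemma bij_diag: "bij_betw (\<lambda>a. (a,a)) A {y \<in> A \<times> A. (\<lambda>(a,b). (b,a)) y = y}"
  unfolding fixset_diag by (rule inj_on_imp_bij_betw) (simp add: inj_on_def)

lemma dmul_sq:
  assumes x: "x \<in> MonA n"
  shows "dmul n f f x = (if phi n x \<in> MonA n then vn ^ wt n x * (f (phi n x))^2 else 0)"
proof -
  let ?C = "coprod_mon n x"
  let ?g = "\<lambda>(a,b). ?C (pairmon a b) * f a * f b"
  have "dmul n f f x = (\<Sum>a\<in>MonA n. \<Sum>b\<in>MonA n. ?C (pairmon a b) * f a * f b)"
    unfolding dmul_def using x by simp
  also have "\<dots> = sum ?g (MonA n \<times> MonA n)"
    by (rule sum.cartesian_product)
  also have "\<dots> = sum ?g {y \<in> MonA n \<times> MonA n. (\<lambda>(a,b). (b,a)) y = y}"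
    by (rule invol_sum) (auto simp: finite_MonA coprod_mon_swap mult_ac)
  also have "\<dots> = sum (\<lambda>x. ?g ((\<lambda>a. (a,a)) x)) (MonA n)"
    by (rule sum.reindex_bij_betw[OF bij_diag, of ?g, symmetric])
  also have "\<dots> = (\<Sum>a\<in>MonA n. dg ?C a * (f a * f a))"
    by (intro sum.cong refl) (simp add: dg_def mult_ac)
  also have "\<dots> = (\<Sum>a\<in>MonA n. if a = phi n x then (if phi n x \<in> MonA n then vn ^ wt n x * (f a * f a) else 0) else 0)"
    unfolding dg_coprod_mon tsmul_def tmono_def MonA_def by (intro sum.cong refl) simp
  also have "\<dots> = (if phi n x \<in> MonA n then vn ^ wt n x * (f (phi n x))^2 else 0)"
    using finite_MonA[of n] by (simp add: power2_eq_square)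
  finally show ?thesis .
qed


definition dd :: "nat \<Rightarrow> (nat \<Rightarrow> nat) \<Rightarrow> nat" where
  "dd n y = (\<Sum>i\<in>gens n. y i * i)"
definition delta :: "nat \<Rightarrow> nat \<Rightarrow> nat" where
  "delta n = (\<lambda>i. if i = 2 ^ n - 1 then 1 else 0)"

lemma LL_distinct: "distinct (LL n)" unfolding LL_def by simp
lemma LL_set: "set (LL n) = gens n" unfolding LL_def gens_def by auto

lemma phi_set: "phi n x i = (\<Sum>j\<in>gens n. x j * em (sig n j) i)"
  unfolding phi_def using sum_list_distinct_conv_sum_set[OF LL_distinct, of "\<lambda>j. x j * em (sig n j) i" n]
  by (simp add: LL_set)

lemma wt_set: "wt n x = (\<Sum>j\<in>gens n. x j)"
  unfolding wt_def using sum_list_distinct_conv_sum_set[OF LL_distinct, of x n]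
  by (simp add: LL_set)

lemma odd_N: "n \<ge> 1 \<Longrightarrow> odd (2 ^ n - 1 :: nat)"
  by (cases n) auto

lemma N_gens: "n \<ge> 1 \<Longrightarrow> 2 ^ n - 1 \<in> gens n"
  unfolding gens_def using odd_N by auto

lemma gens_le: "j \<in> gens n \<Longrightarrow> j \<le> 2 ^ n - 1" unfolding gens_def by auto
lemma gens_pos: "j \<in> gens n \<Longrightarrow> j \<ge> 1" unfolding gens_def by (cases j) auto

lemma od_facts:
  fixes m :: nat
  assumes "m > 0"
  shows "odd (m div 2 ^ multiplicity 2 m)" "2 ^ multiplicity 2 m * (m div 2 ^ multiplicity 2 m) = m"
proof -
  show "odd (m div 2 ^ multiplicity 2 m)"
    using multiplicity_decompose[of m 2] assms by simp
  show "2 ^ multiplicity 2 m * (m div 2 ^ multiplicity 2 m) = m"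
    using multiplicity_dvd[of 2 m] by simp
qed

lemma sig_facts:
  assumes n: "n \<ge> 1" and j: "j \<in> gens n"
  shows "2 * sig n j = (2 ^ n - 1) + j" "sig n j \<ge> 1" "sig n j \<le> 2 ^ n - 1"
proof -
  from odd_N[OF n] obtain a where a: "(2::nat) ^ n - 1 = 2 * a + 1" by (rule oddE)
  have "odd j" using j unfolding gens_def by simp
  then obtain b where b: "j = 2 * b + 1" by (rule oddE)
  have "b \<le> a" using gens_le[OF j] a b by simp
  then have s: "sig n j = a + b + 1" unfolding sig_def NN_def a b by simp
  show "2 * sig n j = (2 ^ n - 1) + j" unfolding s unfolding a b by simp
  show "sig n j \<ge> 1" unfolding s by simp
  show "sig n j \<le> 2 ^ n - 1" unfolding s a using \<open>b \<le> a\<close> by simp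
qed

lemma em_deg:
  assumes n: "n \<ge> 1" and m: "m \<ge> 1" "m \<le> 2 ^ n - 1"
  shows "(\<Sum>i\<in>gens n. em m i * i) = m"
proof -
  let ?o = "m div 2 ^ multiplicity 2 m"
  have o: "odd ?o" "2 ^ multiplicity 2 m * ?o = m" using od_facts m by auto
  have "?o \<le> m" by simp
  have "(2::nat) ^ n > 0" by simp
  then have "m < 2 ^ n" using m(2) by linarith
  then have "?o < 2 ^ n" using \<open>?o \<le> m\<close> by linarith
  then have og: "?o \<in> gens n" unfolding gens_def using o(1) by simp
  have "(\<Sum>i\<in>gens n. em m i * i) = (\<Sum>i\<in>gens n. if i = ?o then 2 ^ multiplicity 2 m * ?o else 0)"
    unfolding em_def by (intro sum.cong) auto
  also have "\<dots> = m" using og finite_gens[of n] o(2) by simp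
  finally show ?thesis .
qed

lemma dd_phi: assumes n: "n \<ge> 1" shows "dd n (phi n x) = (\<Sum>j\<in>gens n. x j * sig n j)"
proof -
  have "dd n (phi n x) = (\<Sum>i\<in>gens n. \<Sum>j\<in>gens n. x j * em (sig n j) i * i)"
    unfolding dd_def phi_set by (simp add: sum_distrib_right)
  also have "\<dots> = (\<Sum>j\<in>gens n. \<Sum>i\<in>gens n. x j * (em (sig n j) i * i))"
    by (subst sum.swap) (simp add: mult.assoc)
  also have "\<dots> = (\<Sum>j\<in>gens n. x j * sig n j)"
  proof (intro sum.cong refl)
    fix j assume j: "j \<in> gens n"
    have "(\<Sum>i\<in>gens n. em (sig n j) i * i) = sig n j"
      by (rule em_deg[OF n sig_facts(2)[OF n j] sig_facts(3)[OF n j]])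
    then show "(\<Sum>i\<in>gens n. x j * (em (sig n j) i * i)) = x j * sig n j"
      by (simp add: sum_distrib_left[symmetric])
  qed
  finally show ?thesis .
qed

lemma two_dd_phi: assumes n: "n \<ge> 1"
  shows "2 * dd n (phi n x) = (2 ^ n - 1) * wt n x + dd n x"
proof -
  have "2 * dd n (phi n x) = (\<Sum>j\<in>gens n. x j * (2 * sig n j))"
    unfolding dd_phi[OF n] by (simp add: sum_distrib_left mult_ac)
  also have "\<dots> = (\<Sum>j\<in>gens n. x j * ((2 ^ n - 1) + j))"
    by (intro sum.cong refl) (simp add: sig_facts[OF n])
  also have "\<dots> = (\<Sum>j\<in>gens n. (2 ^ n - 1) * x j + x j * j)"
    by (intro sum.cong refl) (simp only: distrib_left mult.commute[of "x _" "2 ^ n - 1"])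
  also have "\<dots> = (2 ^ n - 1) * wt n x + dd n x"
    unfolding wt_set dd_def sum.distrib sum_distrib_left by (rule refl)
  finally show ?thesis .
qed


lemma MonA_iff: "x \<in> MonA n \<longleftrightarrow> (\<forall>i\<in>gens n. x i < bnd n i) \<and> (\<forall>i. i \<notin> gens n \<longrightarrow> x i = 0)"
  unfolding MonA_def monset_def by simp

lemma bnd_N: assumes n: "n \<ge> 1" shows "bnd n (2 ^ n - 1) = 2"
proof -
  define M :: nat where "M = 2 ^ n - 1"
  have "(2::nat) ^ n \<ge> 2 ^ 1" using n by (intro power_increasing) auto
  then have Mpos: "M > 0" unfolding M_def by simp
  have h: "(2::nat) ^ (n + 1) - 2 = 2 * M" unfolding M_def by (simp add: diff_mult_distrib2)
  have "real (2 ^ (n + 1) - 2) / real M = 2" unfolding h using Mpos by simp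
  then have "kexp n M = 1" unfolding kexp_def by simp
  then show ?thesis unfolding bnd_def M_def by simp
qed

lemma bnd_pos: "bnd n j \<ge> 1" unfolding bnd_def by simp

lemma zero_MonA: "(\<lambda>_. 0) \<in> MonA n"
  unfolding MonA_iff using bnd_pos by (auto simp: Suc_le_eq)

lemma delta_MonA: "n \<ge> 1 \<Longrightarrow> delta n \<in> MonA n"
  unfolding MonA_iff delta_def using N_gens bnd_N bnd_pos by (auto simp: Suc_le_eq)

lemma phi_zero: "phi n (\<lambda>_. 0) = (\<lambda>_. 0)" unfolding phi_set by simp
lemma wt_zero: "wt n (\<lambda>_. 0) = 0" unfolding wt_set by simp
lemma dd_zero: "dd n (\<lambda>_. 0) = 0" unfolding dd_def by simp

lemma sig_N: "sig n (2 ^ n - 1) = 2 ^ n - 1" unfolding sig_def NN_def by simp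

lemma em_N: assumes n: "n \<ge> 1" shows "em (2 ^ n - 1) = delta n"
proof -
  have m: "multiplicity (2::nat) (2 ^ n - 1) = 0"
    by (rule not_dvd_imp_multiplicity_0) (use odd_N[OF n] in simp)
  show ?thesis unfolding em_def delta_def m by (rule ext) simp
qed

lemma sum_delta_gen: assumes n: "n \<ge> 1" shows "(\<Sum>j\<in>gens n. delta n j * g j) = g (2 ^ n - 1)"
proof -
  have "(\<Sum>j\<in>gens n. delta n j * g j) = (\<Sum>j\<in>gens n. if j = 2 ^ n - 1 then g j else 0)"
    by (rule sum.cong) (simp_all add: delta_def)
  also have "\<dots> = (if 2 ^ n - 1 \<in> gens n then g (2 ^ n - 1) else 0)"
    by (rule sum.delta[OF finite_gens])
  also have "\<dots> = g (2 ^ n - 1)" using N_gens[OF n] by (simp only: if_True)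
  finally show ?thesis .
qed

lemma phi_delta: "n \<ge> 1 \<Longrightarrow> phi n (delta n) = delta n"
proof
  fix i assume n: "n \<ge> 1"
  show "phi n (delta n) i = delta n i"
    unfolding phi_set sum_delta_gen[OF n, of "\<lambda>j. em (sig n j) i"] sig_N em_N[OF n] by (rule refl)
qed

lemma wt_delta: "n \<ge> 1 \<Longrightarrow> wt n (delta n) = 1"
  unfolding wt_set using sum_delta_gen[of n "\<lambda>_. 1"] by simp

lemma dd_delta: "n \<ge> 1 \<Longrightarrow> dd n (delta n) = 2 ^ n - 1"
  unfolding dd_def using sum_delta_gen[of n "\<lambda>j. j"] by simp

lemma delta_nz: "delta n \<noteq> (\<lambda>_. 0)"
proof
  assume "delta n = (\<lambda>_. 0)"
  then have "delta n (2 ^ n - 1) = 0" by simp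
  then show False unfolding delta_def by simp
qed

lemma exists_j:
  assumes n: "n \<ge> 1" and x: "x \<in> MonA n" and x0: "x \<noteq> (\<lambda>_. 0)" and xd: "x \<noteq> delta n"
  shows "\<exists>j\<in>gens n. j \<noteq> 2 ^ n - 1 \<and> x j > 0"
proof (rule ccontr)
  assume "\<not> ?thesis"
  then have h: "\<And>j. j \<in> gens n \<Longrightarrow> j \<noteq> 2 ^ n - 1 \<Longrightarrow> x j = 0" by auto
  have out: "\<And>i. i \<notin> gens n \<Longrightarrow> x i = 0" using x unfolding MonA_iff by simp
  have xe: "x = (\<lambda>i. if i = 2 ^ n - 1 then x (2 ^ n - 1) else 0)"
  proof
    fix i show "x i = (if i = 2 ^ n - 1 then x (2 ^ n - 1) else 0)"
      using h out by (cases "i \<in> gens n") auto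
  qed
  have "x (2 ^ n - 1) < 2" using x N_gens[OF n] bnd_N[OF n] unfolding MonA_iff by auto
  then consider "x (2 ^ n - 1) = 0" | "x (2 ^ n - 1) = 1" by linarith
  then show False
  proof cases
    case 1
    have "x i = 0" for i
    proof (cases "i = 2 ^ n - 1")
      case True then show ?thesis using 1 by simp
    next
      case False then show ?thesis using fun_cong[OF xe, of i] by simp
    qed
    then have "x = (\<lambda>_. 0)" by auto
    then show False using x0 by simp
  next
    case 2
    have "x i = delta n i" for i
    proof (cases "i = 2 ^ n - 1")
      case True then show ?thesis using 2 unfolding delta_def by simp
    next
      case False then show ?thesis using fun_cong[OF xe, of i] unfolding delta_def by simp
    qed
    then have "x = delta n" by auto
    then show False using xd by simp
  qed
qed

lemma key_nontriv:
  assumes n: "n \<ge> 1" and x: "x \<in> MonA n" and x0: "x \<noteq> (\<lambda>_. 0)" and xd: "x \<noteq> delta n"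
  shows "dd n x < dd n (phi n x)" "phi n x \<noteq> (\<lambda>_. 0)" "phi n x \<noteq> delta n"
proof -
  obtain j0 where j0: "j0 \<in> gens n" "j0 \<noteq> 2 ^ n - 1" "x j0 > 0" using exists_j[OF assms] by blast
  define N :: nat where "N = 2 ^ n - 1"
  define w where "w = wt n x"
  define D where "D = dd n x"
  have NW: "N * w = (\<Sum>j\<in>gens n. x j * N)"
    unfolding w_def wt_set by (simp add: sum_distrib_left mult.commute)
  have lt: "D < N * w"
    unfolding NW D_def dd_def
  proof (rule sum_strict_mono_ex1[OF finite_gens])
    show "\<forall>j\<in>gens n. x j * j \<le> x j * N" using gens_le unfolding N_def by (simp add: mult_le_mono2)
    have "j0 < N" using gens_le[OF j0(1)] j0(2) unfolding N_def by simp
    then have "x j0 * j0 < x j0 * N" using j0(3) by simp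
    then show "\<exists>j\<in>gens n. x j * j < x j * N" using j0(1) by blast
  qed
  have "x j0 * j0 \<le> D" unfolding D_def dd_def
    by (rule member_le_sum[OF j0(1)]) (auto simp: finite_gens)
  moreover have "x j0 * j0 > 0" using j0(3) gens_pos[OF j0(1)] by simp
  ultimately have Dpos: "D > 0" by linarith
  have two: "2 * dd n (phi n x) = N * w + D" unfolding N_def w_def D_def by (rule two_dd_phi[OF n])
  show "dd n x < dd n (phi n x)" using two lt unfolding D_def by linarith
  then show "phi n x \<noteq> (\<lambda>_. 0)" using dd_zero[of n] by auto
  show "phi n x \<noteq> delta n"
  proof
    assume "phi n x = delta n"
    then have "dd n (phi n x) = N" unfolding N_def using dd_delta[OF n] by simp
    then have e: "2 * N = N * w + D" using two by simp
    show False
    proof (cases "w \<le> 1")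
      case True
      then have "N * w \<le> N * 1" by (intro mult_le_mono2)
      then show False using e lt by linarith
    next
      case False
      then have "N * 2 \<le> N * w" by (intro mult_le_mono2) simp
      then show False using e Dpos by linarith
    qed
  qed
qed


lemma coef_diff: "(a::coef) - b = a + b"
  by (simp add: diff_conv_add_uminus coef_minus)

lemma dd_le_bound: "x \<in> MonA n \<Longrightarrow> dd n x \<le> (\<Sum>i\<in>gens n. bnd n i * i)"
  unfolding dd_def MonA_iff by (intro sum_mono) (simp add: less_imp_le)

lemma dual_out: "f \<in> dual n \<Longrightarrow> x \<notin> MonA n \<Longrightarrow> f x = 0"
  unfolding dual_def by simp

lemma idem_vanish:
  assumes n: "n \<ge> 1" and fd: "f \<in> dual n" and idem: "dmul n f f = f"
  shows "x \<in> MonA n \<Longrightarrow> x \<noteq> (\<lambda>_. 0) \<Longrightarrow> x \<noteq> delta n \<Longrightarrow> f x = 0"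
proof (induction "(\<Sum>i\<in>gens n. bnd n i * i) - dd n x" arbitrary: x rule: less_induct)
  case less
  have "f x = dmul n f f x" using idem by simp
  also have "\<dots> = (if phi n x \<in> MonA n then vn ^ wt n x * (f (phi n x))^2 else 0)"
    by (rule dmul_sq[OF less.prems(1)])
  also have "\<dots> = 0"
  proof (cases "phi n x \<in> MonA n")
    case True
    note k = key_nontriv[OF n less.prems]
    have "dd n (phi n x) \<le> (\<Sum>i\<in>gens n. bnd n i * i)" by (rule dd_le_bound[OF True])
    then have "(\<Sum>i\<in>gens n. bnd n i * i) - dd n (phi n x) < (\<Sum>i\<in>gens n. bnd n i * i) - dd n x"
      using k(1) by linarith
    then have "f (phi n x) = 0" using less.hyps True k(2,3) by blast
    then show ?thesis by simp
  qed simp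
  finally show ?case .
qed

lemma sq_cases01: "(a::coef) = a ^ 2 \<Longrightarrow> a = 0 \<or> a = 1"
proof -
  assume h: "a = a ^ 2"
  have "a * (a - 1) = 0" using h by (simp add: right_diff_distrib power2_eq_square)
  then show ?thesis by simp
qed

lemma sq_casesv: "(b::coef) = vn * b ^ 2 \<Longrightarrow> b = 0 \<or> b = vn_inv"
proof -
  assume h: "b = vn * b ^ 2"
  have "b * (vn * b - 1) = 0" using h by (simp add: right_diff_distrib power2_eq_square mult_ac)
  then have "b = 0 \<or> vn * b = 1" by simp
  then show ?thesis
  proof
    assume vb: "vn * b = 1"
    have "vn_inv * vn = 1" using vn_vn_inv by (simp add: mult.commute)
    then have "b = (vn_inv * vn) * b" by simp
    also have "\<dots> = vn_inv * (vn * b)" by (simp only: mult.assoc)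
    also have "\<dots> = vn_inv" using vb by simp
    finally show ?thesis by simp
  qed simp
qed

lemma vn_inv_nz: "vn_inv \<noteq> 0"
  using vn_vn_inv by auto

lemma idem_of_form:
  assumes n: "n \<ge> 1" and a: "a = a ^ 2" and b: "b = vn * b ^ 2"
    and f: "f = (\<lambda>t. (if t = (\<lambda>_. 0) then a else 0) + (if t = delta n then b else 0))"
  shows "dmul n f f = f"
proof
  fix x
  have dn: "delta n \<noteq> (\<lambda>_. 0)" by (rule delta_nz)
  show "dmul n f f x = f x"
  proof (cases "x \<in> MonA n")
    case False
    then have "x \<noteq> (\<lambda>_. 0)" "x \<noteq> delta n" using zero_MonA delta_MonA[OF n] by auto
    then show ?thesis using False unfolding dmul_def f by simp
  next
    case True
    note ds = dmul_sq[OF True, of f]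
    consider "x = (\<lambda>_. 0)" | "x = delta n" | "x \<noteq> (\<lambda>_. 0)" "x \<noteq> delta n" by blast
    then show ?thesis
    proof cases
      case 1
      show ?thesis using ds[unfolded 1] zero_MonA[of n] dn a unfolding 1 f phi_zero wt_zero by simp
    next
      case 2
      show ?thesis using ds[unfolded 2] delta_MonA[OF n] dn b
        unfolding 2 f phi_delta[OF n] wt_delta[OF n] by simp
    next
      case 3
      note k = key_nontriv[OF n True 3]
      show ?thesis using ds k(2,3) 3 unfolding f by simp
    qed
  qed
qed

theorem proposition5p6:
  fixes n :: nat and f :: "(nat \<Rightarrow> nat) \<Rightarrow> coef"
  assumes "n \<ge> 1" and "f \<in> dual n"
  shows "(dmul n f f = f \<and> f \<noteq> (\<lambda>_. 0) \<and> f \<noteq> dunit n) \<longleftrightarrow>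
         (f = (\<lambda>t. vn_inv * alpha n t) \<or> f = (\<lambda>t. dunit n t - vn_inv * alpha n t))"
proof -
  note n = assms(1) and fd = assms(2)
  have dn: "delta n \<noteq> (\<lambda>_. 0)" by (rule delta_nz)
  have alpha_eq: "alpha n t = (if t = delta n then 1 else 0)" for t
    unfolding alpha_def delta_def by simp
  have dunit_eq: "dunit n t = (if t = (\<lambda>_. 0) then 1 else 0)" for t
    unfolding dunit_def by simp
  have form1: "(\<lambda>t. vn_inv * alpha n t) =
      (\<lambda>t. (if t = (\<lambda>_. 0) then 0 else 0) + (if t = delta n then vn_inv else 0))"
    unfolding alpha_eq by (rule ext) simp
  have form2: "(\<lambda>t. dunit n t - vn_inv * alpha n t) =
      (\<lambda>t. (if t = (\<lambda>_. 0) then 1 else 0) + (if t = delta n then vn_inv else 0))"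
    unfolding alpha_eq dunit_eq coef_diff by (rule ext) simp
  have vv: "vn_inv = vn * vn_inv ^ 2" using vn_vn_inv by (simp add: power2_eq_square mult_ac)
  show ?thesis
  proof
    assume h: "dmul n f f = f \<and> f \<noteq> (\<lambda>_. 0) \<and> f \<noteq> dunit n"
    then have idem: "dmul n f f = f" by simp
    define a where "a = f (\<lambda>_. 0)"
    define b where "b = f (delta n)"
    have "f (\<lambda>_. 0) = dmul n f f (\<lambda>_. 0)" using idem by simp
    then have "a = a ^ 2" unfolding a_def dmul_sq[OF zero_MonA] phi_zero wt_zero using zero_MonA by simp
    then have a01: "a = 0 \<or> a = 1" by (rule sq_cases01)
    have "f (delta n) = dmul n f f (delta n)" using idem by simp
    then have "b = vn * b ^ 2" unfolding b_def dmul_sq[OF delta_MonA[OF n]] phi_delta[OF n] wt_delta[OF n]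
      using delta_MonA[OF n] by simp
    then have b0v: "b = 0 \<or> b = vn_inv" by (rule sq_casesv)
    have fform: "f = (\<lambda>t. (if t = (\<lambda>_. 0) then a else 0) + (if t = delta n then b else 0))"
    proof
      fix t
      show "f t = (if t = (\<lambda>_. 0) then a else 0) + (if t = delta n then b else 0)"
      proof (cases "t \<in> MonA n")
        case False
        then have "t \<noteq> (\<lambda>_. 0)" "t \<noteq> delta n" using zero_MonA delta_MonA[OF n] by auto
        then show ?thesis using dual_out[OF fd False] by simp
      next
        case True
        consider "t = (\<lambda>_. 0)" | "t = delta n" | "t \<noteq> (\<lambda>_. 0)" "t \<noteq> delta n" by blast
        then show ?thesis
        proof cases
          case 1 then show ?thesis using dn unfolding a_def by simp
        next
          case 2 then show ?thesis using dn unfolding b_def by simp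
        next
          case 3 then show ?thesis using idem_vanish[OF n fd idem True] by simp
        qed
      qed
    qed
    have f0: "f \<noteq> (\<lambda>_. 0)" and fu: "f \<noteq> dunit n" using h by auto
    from a01 b0v show "f = (\<lambda>t. vn_inv * alpha n t) \<or> f = (\<lambda>t. dunit n t - vn_inv * alpha n t)"
    proof (elim disjE)
      assume "a = 0" "b = 0"
      then have "f = (\<lambda>_. 0)" unfolding fform by (auto simp: fun_eq_iff)
      then show ?thesis using f0 by simp
    next
      assume "a = 1" "b = 0"
      then have "f = dunit n" unfolding fform dunit_def by (auto simp: fun_eq_iff)
      then show ?thesis using fu by simp
    next
      assume h1: "a = 0" "b = vn_inv"
      show ?thesis unfolding form1 fform h1 by (rule disjI1) (rule refl)
    next
      assume h1: "a = 1" "b = vn_inv"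
      show ?thesis unfolding form2 fform h1 by (rule disjI2) (rule refl)
    qed
  next
    assume "f = (\<lambda>t. vn_inv * alpha n t) \<or> f = (\<lambda>t. dunit n t - vn_inv * alpha n t)"
    then show "dmul n f f = f \<and> f \<noteq> (\<lambda>_. 0) \<and> f \<noteq> dunit n"
    proof
      assume f: "f = (\<lambda>t. vn_inv * alpha n t)"
      have "dmul n f f = f" by (rule idem_of_form[OF n _ vv f[unfolded form1]]) simp
      moreover have "f (delta n) = vn_inv" unfolding f form1 using dn by simp
      moreover have "f (\<lambda>_. 0) = 0" unfolding f form1 using dn by simp
      ultimately show ?thesis using vn_inv_nz dn unfolding dunit_def by (auto dest: fun_cong)
    next
      assume f: "f = (\<lambda>t. dunit n t - vn_inv * alpha n t)"
      have "dmul n f f = f" by (rule idem_of_form[OF n _ vv f[unfolded form2]]) simp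
      moreover have "f (delta n) = vn_inv" unfolding f form2 using dn by simp
      moreover have "f (\<lambda>_. 0) = 1" unfolding f form2 using dn by simp
      ultimately show ?thesis using vn_inv_nz dn unfolding dunit_def by (auto dest: fun_cong)
    qed
  qed
qed


end
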